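(* Let $\sigma_w^2=0$. Then $(\alpha,\sigma^2)=(1,0)$ is a fixed point of the real SE map. Let $\delta_{\mathrm{global}}:=1+\frac{4}{\pi^2}$. If $\delta>\delta_{\mathrm{global}}$, there exist $\epsilon_1>0,\epsilon_2>0$ such that for all $\alpha_0\in(1-\epsilon_1,1)$ and $\sigma_0^2\in(0,\epsilon_2)$ the real SE sequences satisfy $\alpha_t\to1$, $\sigma_t^2\to0$. If $\delta<\delta_{\mathrm{global}}$, the real SE sequences cannot converge to $(1,0)$ unless $(\alpha_0,\sigma_0^2)=(1,0)$.
   Context: Real state evolution. Fix $\delta>0$, $\sigma_w^2\ge0$. For $\alpha\in\mathbb{R}$, $\sigma^2\ge0$, $(\alpha,\sigma^2)\ne(0,0)$, with $\sigma=\sqrt{\sigma^2}$ and the convention $\arctan(\alpha/0)=\frac\pi2\,\mathrm{sign}(\alpha)$, define $$\psi_1(\alpha,\sigma^2)=\frac2\pi\arctan\Big(\frac\alpha\sigma\Big),\qquad \psi_2(\alpha,\sigma^2;\delta,\sigma_w^2)=\frac1\delta\Big[\alpha^2+\sigma^2+1-\frac{4\sigma}{\pi}-\frac{4\alpha}{\pi}\arctan\Big(\frac\alpha\sigma\Big)\Big]+\sigma_w^2 .$$ The real SE sequences are $\alpha_{t+1}=\psi_1(\alpha_t,\sigma_t^2)$, $\sigma_{t+1}^2=\psi_2(\alpha_t,\sigma_t^2;\delta,\sigma_w^2)$, $t\ge0$. *)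

theory Defs
  imports Complex_Main
begin

definition arctan_conv :: "real \<Rightarrow> real \<Rightarrow> real" where
  "arctan_conv a s = (if s = 0 then pi / 2 * sgn a else arctan (a / s))"

definition psi1 :: "real \<Rightarrow> real \<Rightarrow> real" where
  "psi1 \<alpha> \<sigma>2 = 2 / pi * arctan_conv \<alpha> (sqrt \<sigma>2)"

definition psi2 :: "real \<Rightarrow> real \<Rightarrow> real \<Rightarrow> real \<Rightarrow> real" where
  "psi2 \<alpha> \<sigma>2 \<delta> \<sigma>w2 =
     (1 / \<delta>) * (\<alpha>\<^sup>2 + \<sigma>2 + 1 - 4 * sqrt \<sigma>2 / pi
                  - 4 * \<alpha> / pi * arctan_conv \<alpha> (sqrt \<sigma>2)) + \<sigma>w2"

primrec se :: "real \<Rightarrow> real \<Rightarrow> real \<Rightarrow> real \<Rightarrow> nat \<Rightarrow> real \<times> real" where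
  "se \<delta> \<sigma>w2 \<alpha>0 \<sigma>02 0 = (\<alpha>0, \<sigma>02)"
| "se \<delta> \<sigma>w2 \<alpha>0 \<sigma>02 (Suc t) =
     (let (a, s) = se \<delta> \<sigma>w2 \<alpha>0 \<sigma>02 t in (psi1 a s, psi2 a s \<delta> \<sigma>w2))"

definition delta_global :: real where
  "delta_global = 1 + 4 / pi\<^sup>2"

end

theory Submission
  imports Defs
begin

lemma arctan_le_self: assumes "(t::real) \<ge> 0" shows "arctan t \<le> t"
proof -
  have "(\<lambda>x. x - arctan x) 0 \<le> (\<lambda>x. x - arctan x) t"
  proof (rule DERIV_nonneg_imp_nondecreasing[OF assms])
    fix x :: real
    show "\<exists>y. ((\<lambda>x. x - arctan x) has_real_derivative y) (at x) \<and> y \<ge> 0"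
    proof (intro exI conjI)
      show "((\<lambda>x. x - arctan x) has_real_derivative (1 - inverse (1 + x\<^sup>2))) (at x)"
        by (auto intro!: derivative_eq_intros)
      have "inverse (1 + x\<^sup>2) \<le> 1" by (simp add: inverse_le_1_iff)
      then show "0 \<le> 1 - inverse (1 + x\<^sup>2)" by simp
    qed
  qed
  then show ?thesis by simp
qed

lemma arctan_lower: assumes "(t::real) \<ge> 0" shows "t - t^3/3 \<le> arctan t"
proof -
  have "(\<lambda>x. arctan x - x + x^3/3) 0 \<le> (\<lambda>x. arctan x - x + x^3/3) t"
  proof (rule DERIV_nonneg_imp_nondecreasing[OF assms])
    fix x :: real
    show "\<exists>y. ((\<lambda>x. arctan x - x + x^3/3) has_real_derivative y) (at x) \<and> y \<ge> 0"
    proof (intro exI conjI)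
      show "((\<lambda>x. arctan x - x + x^3/3) has_real_derivative (inverse (1 + x\<^sup>2) - 1 + x\<^sup>2)) (at x)"
        by (auto intro!: derivative_eq_intros)
      have p: "1 + x\<^sup>2 > 0" by (simp add: add_pos_nonneg)
      have "inverse (1 + x\<^sup>2) - 1 + x\<^sup>2 = x^4 / (1+x\<^sup>2)"
        using p by (simp add: field_simps power2_eq_square power4_eq_xxxx)
      also have "\<dots> \<ge> 0" using p by simp
      finally show "0 \<le> inverse (1 + x\<^sup>2) - 1 + x\<^sup>2" .
    qed
  qed
  then show ?thesis by simp
qed

lemma arctan_conv_pos:
  assumes "a > 0" "s \<ge> 0" shows "arctan_conv a s = pi/2 - arctan (s/a)"
proof (cases "s = 0")
  case True then show ?thesis using assms by (simp add: arctan_conv_def)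
next
  case False
  then have "s/a \<noteq> 0" "s/a > 0" "s > 0" using assms by auto
  then have "sgn (s/a) = 1" by (simp add: sgn_if)
  then have "arctan (1/(s/a)) = pi/2 - arctan (s/a)" using arctan_inverse[of "s/a"] \<open>s/a \<noteq> 0\<close> by simp
  moreover have "a / s = 1/(s/a)" by simp
  ultimately have "arctan (a/s) = pi/2 - arctan (s/a)" by metis
  then show ?thesis using False by (simp add: arctan_conv_def)
qed

lemma psi1_pos: assumes "a > 0" "\<sigma>2 \<ge> 0"
  shows "psi1 a \<sigma>2 = 1 - 2/pi * arctan (sqrt \<sigma>2 / a)"
  using assms by (simp add: psi1_def arctan_conv_pos right_diff_distrib)

lemma psi2_pos: assumes "a > 0" "\<sigma>2 \<ge> 0" "\<delta> > 0"
  shows "psi2 a \<sigma>2 \<delta> 0 = ((1-a)\<^sup>2 + \<sigma>2 - 4*a/pi*(sqrt \<sigma>2/a - arctan (sqrt \<sigma>2/a))) / \<delta>"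
proof -
  have e: "4*a/pi*(sqrt \<sigma>2/a - arctan (sqrt \<sigma>2/a)) = 4*sqrt \<sigma>2/pi - 4*a/pi*arctan (sqrt \<sigma>2/a)"
    using assms by (simp add: field_simps)
  have f: "4*a/pi*(pi/2 - arctan (sqrt \<sigma>2/a)) = 2*a - 4*a/pi*arctan (sqrt \<sigma>2/a)"
    by (simp add: field_simps)
  show ?thesis unfolding psi2_def arctan_conv_pos[OF assms(1) real_sqrt_ge_zero[OF assms(2)]] e f
    using assms by (simp add: field_simps power2_eq_square)
qed

lemma psi1_le1: "psi1 a \<sigma>2 \<le> 1"
proof -
  have "arctan_conv a (sqrt \<sigma>2) \<le> pi/2"
    using arctan_ubound[of "a / sqrt \<sigma>2"] by (auto simp: arctan_conv_def sgn_if less_imp_le)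
  then show ?thesis unfolding psi1_def using pi_ge_two by (simp add: field_simps)
qed

lemma psi1_neg: assumes "a > 0" "\<sigma>2 < 0" shows "psi1 a \<sigma>2 < 0"
proof -
  have "sqrt \<sigma>2 < 0" using assms by simp
  then have "a / sqrt \<sigma>2 < 0" using assms by (simp add: divide_pos_neg)
  then have "arctan (a / sqrt \<sigma>2) < 0" by simp
  then show ?thesis using assms by (simp add: psi1_def arctan_conv_def divide_neg_pos)
qed

lemma psi_pre:
  assumes "psi1 a \<sigma>2 = 1" "psi2 a \<sigma>2 \<delta> 0 = 0" "\<delta> > 0"
  shows "a = 1 \<and> \<sigma>2 = 0"
proof -
  have s0: "sqrt \<sigma>2 = 0"
  proof (rule ccontr)
    assume "sqrt \<sigma>2 \<noteq> 0"
    then have "psi1 a \<sigma>2 = 2/pi * arctan (a / sqrt \<sigma>2)" by (simp add: psi1_def arctan_conv_def)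
    also have "\<dots> < 2/pi * (pi/2)" using arctan_ubound pi_ge_two by (intro mult_strict_left_mono) auto
    finally show False using assms by simp
  qed
  then have "psi1 a \<sigma>2 = sgn a" by (simp add: psi1_def arctan_conv_def)
  then have "a > 0" using assms by (simp add: sgn_if split: if_splits)
  have "\<sigma>2 = 0" using s0 by simp
  then have "psi2 a \<sigma>2 \<delta> 0 = (a - 1)\<^sup>2 / \<delta>"
    using \<open>a > 0\<close> by (simp add: psi2_def arctan_conv_def field_simps power2_eq_square)
  then have "a = 1" using assms by simp
  then show ?thesis using \<open>\<sigma>2 = 0\<close> by simp
qed

lemma E_bound:
  assumes "a > 0" "s \<ge> 0"
  shows "0 \<le> 4*a/pi*(s/a - arctan (s/a))" "4*a/pi*(s/a - arctan (s/a)) \<le> 4*s^3/(3*pi*a\<^sup>2)"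
proof -
  define t where "t = s/a"
  have t0: "t \<ge> 0" using assms by (simp add: t_def)
  have c: "4*a/pi \<ge> 0" using assms by simp
  have l: "0 \<le> t - arctan t" using arctan_le_self[OF t0] by simp
  have u: "t - arctan t \<le> t^3/3" using arctan_lower[OF t0] by simp
  have "0 \<le> 4*a/pi*(t - arctan t)" by (rule mult_nonneg_nonneg[OF c l])
  then show "0 \<le> 4*a/pi*(s/a - arctan (s/a))" by (simp only: t_def)
  have "4*a/pi*(t - arctan t) \<le> 4*a/pi*(t^3/3)" using mult_left_mono[OF u c] .
  also have "4*a/pi*(t^3/3) = 4*s^3/(3*pi*a\<^sup>2)" using assms
    by (simp add: t_def field_simps power2_eq_square power3_eq_cube)
  finally show "4*a/pi*(s/a - arctan (s/a)) \<le> 4*s^3/(3*pi*a\<^sup>2)" by (simp add: t_def)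
qed

lemma cube_le:
  assumes "a \<ge> 1/2" "s \<ge> 0" "s \<le> g/4" "g \<ge> 0" "g \<le> 1"
  shows "4*s^3/(3*pi*a\<^sup>2) \<le> g * s\<^sup>2"
proof -
  have a2: "a\<^sup>2 \<ge> 1/4" using assms(1) power_mono[of "1/2" a 2] by (simp add: power2_eq_square)
  have p: "3*pi*a\<^sup>2 \<ge> 3*2*(1/4)" using pi_ge_two a2
    by (intro mult_mono) auto
  have pos: "3*pi*a\<^sup>2 > 0" using p by linarith
  have "4*s \<le> g" using assms by simp
  also have "g \<le> g * (3*pi*a\<^sup>2)" using p assms(4) by (simp add: mult_le_cancel_left1 mult_left_mono[of 1 "3*pi*a\<^sup>2" g, simplified])
  finally have "4*s \<le> g * (3*pi*a\<^sup>2)" .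
  then have "4*s * s\<^sup>2 \<le> g * (3*pi*a\<^sup>2) * s\<^sup>2" by (simp add: mult_right_mono)
  then have "4*s^3 \<le> (g * s\<^sup>2) * (3*pi*a\<^sup>2)" by (simp add: power2_eq_square power3_eq_cube algebra_simps)
  then show ?thesis using pos by (simp add: pos_divide_le_eq)
qed

lemma step_stable:
  assumes "\<delta> > 0" "a \<ge> 1/2" "0 \<le> \<sigma>2" "\<sigma>2 \<le> 1/16" "\<eta> \<ge> 0" "(1+\<eta>)*a\<^sup>2 \<ge> 1"
  shows "(1 - psi1 a \<sigma>2)\<^sup>2 \<le> 4/pi\<^sup>2*(1+\<eta>)*\<sigma>2"
    and "0 \<le> psi2 a \<sigma>2 \<delta> 0"
    and "psi2 a \<sigma>2 \<delta> 0 \<le> ((1-a)\<^sup>2 + \<sigma>2)/\<delta>"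
proof -
  have a0: "a > 0" using assms by simp
  define s where "s = sqrt \<sigma>2"
  have s0: "s \<ge> 0" and ss: "s\<^sup>2 = \<sigma>2" using assms by (auto simp: s_def)
  define t where "t = s/a"
  have t0: "t \<ge> 0" using s0 a0 by (simp add: t_def)
  have at: "(arctan t)\<^sup>2 \<le> t\<^sup>2" using arctan_le_self[OF t0] t0 by (intro power_mono) auto
  have sa: "\<sigma>2 / a\<^sup>2 \<le> (1+\<eta>)*\<sigma>2"
  proof -
    have "\<sigma>2 \<le> ((1+\<eta>)*a\<^sup>2)*\<sigma>2" using assms(6) assms(3) by (simp add: mult_le_cancel_right1)
    then show ?thesis using a0 by (simp add: divide_le_eq algebra_simps)
  qed
  have "(1 - psi1 a \<sigma>2)\<^sup>2 = 4/pi\<^sup>2 * (arctan t)\<^sup>2"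
    using psi1_pos[OF a0 assms(3)] by (simp add: t_def s_def power2_eq_square)
  also have "\<dots> \<le> 4/pi\<^sup>2 * t\<^sup>2" using at by (rule mult_left_mono) auto
  also have "t\<^sup>2 = \<sigma>2 / a\<^sup>2" using ss by (simp add: t_def power_divide)
  also have "4/pi\<^sup>2 * (\<sigma>2 / a\<^sup>2) \<le> 4/pi\<^sup>2 * ((1+\<eta>)*\<sigma>2)" using sa by (rule mult_left_mono) auto
  finally show "(1 - psi1 a \<sigma>2)\<^sup>2 \<le> 4/pi\<^sup>2*(1+\<eta>)*\<sigma>2" by (simp only: mult.assoc)
  have eq: "psi2 a \<sigma>2 \<delta> 0 = ((1-a)\<^sup>2 + \<sigma>2 - 4*a/pi*(s/a - arctan (s/a))) / \<delta>"
    using psi2_pos[OF a0 assms(3) assms(1)] by (simp add: s_def)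
  have e1: "0 \<le> 4*a/pi*(s/a - arctan (s/a))" using E_bound[OF a0 s0] by simp
  have e2: "4*a/pi*(s/a - arctan (s/a)) \<le> 1 * s\<^sup>2"
  proof -
    have "s \<le> 1/4" using assms(4) s_def real_sqrt_le_mono[of \<sigma>2 "1/16"] by (simp add: real_sqrt_divide)
    then show ?thesis using E_bound(2)[OF a0 s0] cube_le[OF assms(2) s0, of 1] by linarith
  qed
  have "0 \<le> (1-a)\<^sup>2 + \<sigma>2 - 4*a/pi*(s/a - arctan (s/a))" using e2 ss zero_le_power2[of "1-a"] by linarith
  then show "0 \<le> psi2 a \<sigma>2 \<delta> 0" unfolding eq using assms(1) by simp
  show "psi2 a \<sigma>2 \<delta> 0 \<le> ((1-a)\<^sup>2 + \<sigma>2)/\<delta>" unfolding eq using e1 assms(1) by (intro divide_right_mono) auto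
qed

lemma step_unstable:
  assumes "\<delta> > 0" "a \<ge> 1/2" "a \<le> 1" "0 \<le> \<sigma>2" "\<sigma>2 \<le> \<gamma>\<^sup>2/16" "0 < \<gamma>" "\<gamma> < 1"
  shows "(1 - psi1 a \<sigma>2)\<^sup>2 \<ge> 4/pi\<^sup>2*(1-\<gamma>)*\<sigma>2"
    and "psi2 a \<sigma>2 \<delta> 0 \<ge> ((1-a)\<^sup>2 + (1-\<gamma>)*\<sigma>2)/\<delta>"
proof -
  have a0: "a > 0" using assms by simp
  define s where "s = sqrt \<sigma>2"
  have s0: "s \<ge> 0" and ss: "s\<^sup>2 = \<sigma>2" using assms by (auto simp: s_def)
  have sg: "s \<le> \<gamma>/4"
  proof -
    have "s \<le> sqrt (\<gamma>\<^sup>2/16)" using assms(5) by (simp add: s_def)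
    also have "sqrt (\<gamma>\<^sup>2/16) = \<gamma>/4" using assms(6) by (simp add: real_sqrt_divide)
    finally show ?thesis .
  qed
  define t where "t = s/a"
  have t0: "t \<ge> 0" using s0 a0 by (simp add: t_def)
  have t2: "t\<^sup>2 = \<sigma>2 / a\<^sup>2" using ss by (simp add: t_def power_divide)
  have a2: "a\<^sup>2 \<ge> 1/4" using assms(2) power_mono[of "1/2" a 2] by (simp add: power2_eq_square)
  have a21: "a\<^sup>2 \<le> 1" using assms(2,3) power_mono[of a 1 2] by simp
  have "\<sigma>2 * 1 \<le> \<sigma>2 * (4*a\<^sup>2)" by (rule mult_left_mono) (use a2 assms(4) in auto)
  then have t2u: "t\<^sup>2 \<le> 4*\<sigma>2" unfolding t2 using a0 by (simp add: divide_le_eq algebra_simps)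
  have t2l: "\<sigma>2 \<le> t\<^sup>2" unfolding t2 using a21 a0 assms(4) by (simp add: le_divide_eq mult_left_le)
  have t2g: "t\<^sup>2 \<le> \<gamma>\<^sup>2/4" using t2u assms(5) by simp
  have gg: "\<gamma>\<^sup>2 \<le> \<gamma>" using assms(6,7) by (simp add: power2_eq_square mult_left_le)
  have h: "0 \<le> t*(1 - t\<^sup>2/3)" using t0 t2g gg assms(7) by simp
  have lo: "t*(1 - t\<^sup>2/3) \<le> arctan t" using arctan_lower[OF t0] by (simp add: algebra_simps power2_eq_square power3_eq_cube)
  have "(t*(1 - t\<^sup>2/3))\<^sup>2 \<le> (arctan t)\<^sup>2" using power_mono[OF lo h] .
  moreover have "(1-\<gamma>)*t\<^sup>2 \<le> (t*(1 - t\<^sup>2/3))\<^sup>2"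
  proof -
    have E1: "(t*(1 - t\<^sup>2/3))\<^sup>2 = t\<^sup>2 * (1 - 2*t\<^sup>2/3) + t\<^sup>2*(t\<^sup>2)\<^sup>2/9" by (simp add: power2_eq_square algebra_simps)
    have "1 - \<gamma> \<le> 1 - 2*t\<^sup>2/3" using t2g gg assms(6) by linarith
    moreover have "t\<^sup>2 * (1 - \<gamma>) \<le> t\<^sup>2 * (1 - 2*t\<^sup>2/3)" by (rule mult_left_mono) (use \<open>1 - \<gamma> \<le> 1 - 2*t\<^sup>2/3\<close> in auto)
    moreover have "0 \<le> t\<^sup>2*(t\<^sup>2)\<^sup>2/9" by simp
    moreover have "(1-\<gamma>)*t\<^sup>2 = t\<^sup>2*(1-\<gamma>)" by simp
    ultimately show ?thesis using E1 by linarith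
  qed
  ultimately have A: "(1-\<gamma>)*\<sigma>2 \<le> (arctan t)\<^sup>2" using t2l assms(7) mult_left_mono[OF t2l, of "1-\<gamma>"] by linarith
  have "(1 - psi1 a \<sigma>2)\<^sup>2 = 4/pi\<^sup>2 * (arctan t)\<^sup>2"
    using psi1_pos[OF a0 assms(4)] by (simp add: t_def s_def power2_eq_square)
  moreover have "4/pi\<^sup>2*((1-\<gamma>)*\<sigma>2) \<le> 4/pi\<^sup>2*(arctan t)\<^sup>2" using A by (rule mult_left_mono) auto
  ultimately show "(1 - psi1 a \<sigma>2)\<^sup>2 \<ge> 4/pi\<^sup>2*(1-\<gamma>)*\<sigma>2" by (simp only: mult.assoc)
  have eq: "psi2 a \<sigma>2 \<delta> 0 = ((1-a)\<^sup>2 + \<sigma>2 - 4*a/pi*(s/a - arctan (s/a))) / \<delta>"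
    using psi2_pos[OF a0 assms(4) assms(1)] by (simp add: s_def)
  have e2: "4*a/pi*(s/a - arctan (s/a)) \<le> \<gamma> * s\<^sup>2"
    using E_bound(2)[OF a0 s0] cube_le[OF assms(2) s0 sg] assms(6,7) by linarith
  show "psi2 a \<sigma>2 \<delta> 0 \<ge> ((1-a)\<^sup>2 + (1-\<gamma>)*\<sigma>2)/\<delta>" unfolding eq using e2 ss assms(1)
    by (intro divide_right_mono) (auto simp: algebra_simps)
qed

lemma se_Suc: "se \<delta> w a0 s0 (Suc t) =
   (psi1 (fst (se \<delta> w a0 s0 t)) (snd (se \<delta> w a0 s0 t)),
    psi2 (fst (se \<delta> w a0 s0 t)) (snd (se \<delta> w a0 s0 t)) \<delta> w)"
  by (simp add: case_prod_beta)

lemma squeeze_geom: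
  fixes f :: "nat \<Rightarrow> real"
  assumes "\<And>t. 0 \<le> f t" "\<And>t. f t \<le> C * \<rho>^t" "0 \<le> \<rho>" "\<rho> < 1"
  shows "f \<longlonglongrightarrow> 0"
proof (rule real_tendsto_sandwich[where f="\<lambda>_. 0" and h="\<lambda>t. C * \<rho>^t"])
  show "\<forall>\<^sub>F n in sequentially. 0 \<le> f n" using assms by simp
  show "\<forall>\<^sub>F n in sequentially. f n \<le> C * \<rho>^n" using assms by simp
  show "(\<lambda>_. 0::real) \<longlonglongrightarrow> 0" by simp
  have "(\<lambda>t. \<rho>^t) \<longlonglongrightarrow> 0" using assms by (intro LIMSEQ_power_zero) simp
  then show "(\<lambda>t. C * \<rho>^t) \<longlonglongrightarrow> 0" using tendsto_mult[OF tendsto_const[of C]] by fastforce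
qed

lemma back_to_start:
  assumes "\<delta> > 0" "se \<delta> 0 a0 s0 n = (1, 0)"
  shows "(a0, s0) = (1, 0)"
  using assms(2)
proof (induction n)
  case 0 then show ?case by simp
next
  case (Suc n)
  have h: "(psi1 (fst (se \<delta> 0 a0 s0 n)) (snd (se \<delta> 0 a0 s0 n)), psi2 (fst (se \<delta> 0 a0 s0 n)) (snd (se \<delta> 0 a0 s0 n)) \<delta> 0) = (1, 0)"
    using Suc.prems by (simp only: se_Suc)
  then have "psi1 (fst (se \<delta> 0 a0 s0 n)) (snd (se \<delta> 0 a0 s0 n)) = 1"
     "psi2 (fst (se \<delta> 0 a0 s0 n)) (snd (se \<delta> 0 a0 s0 n)) \<delta> 0 = 0"
    by simp_all
  from psi_pre[OF this assms(1)] have "se \<delta> 0 a0 s0 n = (1,0)" by (simp add: prod_eq_iff)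
  then show ?case using Suc.IH by simp
qed

lemma to_one:
  fixes A :: "nat \<Rightarrow> real"
  assumes "(\<lambda>t. (1 - A t)\<^sup>2) \<longlonglongrightarrow> 0"
  shows "A \<longlonglongrightarrow> 1"
proof -
  have "(\<lambda>t. sqrt ((1 - A t)\<^sup>2)) \<longlonglongrightarrow> sqrt 0" by (intro tendsto_intros assms)
  then have "(\<lambda>t. \<bar>1 - A t\<bar>) \<longlonglongrightarrow> 0" by simp
  then have "(\<lambda>t. 1 - A t) \<longlonglongrightarrow> 0" by (simp only: tendsto_rabs_zero_iff)
  then have "(\<lambda>t. 1 - (1 - A t)) \<longlonglongrightarrow> 1 - 0" by (intro tendsto_intros)
  then show ?thesis by simp
qed

lemma part_stable:
  assumes "\<delta> > delta_global"
  shows "\<exists>\<epsilon>1 > 0. \<exists>\<epsilon>2 > 0. \<forall>\<alpha>0 \<sigma>02.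
             \<alpha>0 \<in> {1 - \<epsilon>1 <..< 1} \<and> \<sigma>02 \<in> {0 <..< \<epsilon>2} \<longrightarrow>
               ((\<lambda>t. fst (se \<delta> 0 \<alpha>0 \<sigma>02 t)) \<longlonglongrightarrow> 1) \<and>
               ((\<lambda>t. snd (se \<delta> 0 \<alpha>0 \<sigma>02 t)) \<longlonglongrightarrow> 0)"
proof -
  define K where "K = 1 + 4/pi\<^sup>2"
  have pi2: "pi\<^sup>2 \<ge> 4" using pi_ge_two power_mono[of 2 pi 2] by simp
  have q: "4/pi\<^sup>2 \<le> 1" "0 < 4/pi\<^sup>2" using pi2 by auto
  have dK: "\<delta> > K" using assms by (simp add: K_def delta_global_def)
  have K1: "K > 1" using q by (simp add: K_def)
  have d0: "\<delta> > 1" using dK K1 by simp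
  define D where "D = \<delta> - K"
  define \<eta> where "\<eta> = D/(2*\<delta>)"
  define \<rho> where "\<rho> = 1 - \<eta>"
  define r where "r = \<eta>/4"
  have D0: "D > 0" "D < \<delta>" using dK K1 by (auto simp: D_def)
  have e0: "\<eta> > 0" "\<eta> < 1/2" using D0 d0 by (auto simp: \<eta>_def field_simps)
  have rho: "\<rho> > 1/2" "\<rho> < 1" using e0 by (auto simp: \<rho>_def)
  have r0: "r > 0" "r < 1/8" using e0 by (auto simp: r_def)
  have ed: "2*\<eta>*\<delta> = D" using d0 by (simp add: \<eta>_def)
  have key: "4/pi\<^sup>2*(1+\<eta>) + \<rho> \<le> \<rho>\<^sup>2*\<delta>"
  proof -
    have "(1-2*\<eta>)*\<delta> \<le> \<rho>\<^sup>2*\<delta>"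
      using d0 by (intro mult_right_mono) (auto simp: \<rho>_def power2_eq_square algebra_simps)
    moreover have "(1-2*\<eta>)*\<delta> = K" using ed by (simp add: D_def algebra_simps)
    moreover have "4/pi\<^sup>2*(1+\<eta>) + \<rho> = K + \<eta>*(4/pi\<^sup>2 - 1)" by (simp add: K_def \<rho>_def algebra_simps add_divide_distrib)
    moreover have "\<eta>*(4/pi\<^sup>2 - 1) \<le> 0" using e0 q by (simp add: mult_nonneg_nonpos)
    ultimately show ?thesis by linarith
  qed
  have key2: "4/pi\<^sup>2*(1+\<eta>)/(\<rho>*\<delta>) + 1/\<delta> \<le> \<rho>"
  proof -
    have pos: "\<rho>*\<delta> > 0" using rho d0 by simp
    have "4/pi\<^sup>2*(1+\<eta>)/(\<rho>*\<delta>) + 1/\<delta> = (4/pi\<^sup>2*(1+\<eta>) + \<rho>)/(\<rho>*\<delta>)"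
      using rho d0 by (simp add: field_simps)
    also have "\<dots> \<le> (\<rho>\<^sup>2*\<delta>)/(\<rho>*\<delta>)" using key pos by (intro divide_right_mono) auto
    also have "\<dots> = \<rho>" using rho d0 by (simp add: power2_eq_square)
    finally show ?thesis .
  qed
  have rr: "(1+\<eta>)*(1-r)\<^sup>2 \<ge> 1"
  proof -
    have "(1-r)\<^sup>2 \<ge> 1 - 2*r" by (simp add: power2_eq_square algebra_simps)
    then have "(1+\<eta>)*(1-r)\<^sup>2 \<ge> (1+\<eta>)*(1-2*r)" using e0 by (intro mult_left_mono) auto
    moreover have "(1+\<eta>)*(1-2*r) = 1 + \<eta>/2 - \<eta>*\<eta>/2" by (simp add: r_def field_simps)
    moreover have "\<eta>*\<eta> \<le> \<eta>" using e0 by (simp add: mult_left_le)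
    ultimately show ?thesis by linarith
  qed
  define V where "V = (\<lambda>a s. (1-a)\<^sup>2/(\<rho>*\<delta>) + s)"
  have rd: "\<rho>*\<delta> > 0" using rho d0 by simp
  have step: "0 \<le> psi2 a s \<delta> 0 \<and> V (psi1 a s) (psi2 a s \<delta> 0) \<le> \<rho> * V a s"
    if h: "\<bar>1-a\<bar> \<le> r" "0 \<le> s" "V a s \<le> r\<^sup>2/\<delta>" for a s
  proof -
    have a1: "a \<ge> 1 - r" using h(1) by linarith
    have ah: "a \<ge> 1/2" using a1 r0 by linarith
    have u0: "0 \<le> (1-a)\<^sup>2/(\<rho>*\<delta>)" using rd by simp
    have "s \<le> r\<^sup>2/\<delta>" using h(3) u0 by (simp add: V_def)
    also have "r\<^sup>2/\<delta> \<le> r\<^sup>2" using d0 by (simp add: divide_le_eq mult_le_cancel_left1)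
    also have "r\<^sup>2 \<le> (1/8)\<^sup>2" using r0 by (intro power_mono) auto
    finally have s16: "s \<le> 1/16" by (simp add: power2_eq_square)
    have "(1-r)\<^sup>2 \<le> a\<^sup>2" using a1 r0 by (intro power_mono) auto
    then have "(1+\<eta>)*(1-r)\<^sup>2 \<le> (1+\<eta>)*a\<^sup>2" using e0 by (intro mult_left_mono) auto
    with rr have ea: "(1+\<eta>)*a\<^sup>2 \<ge> 1" by linarith
    note st = step_stable[OF _ ah h(2) s16 _ ea, of \<delta>] 
    have S1: "(1 - psi1 a s)\<^sup>2 \<le> 4/pi\<^sup>2*(1+\<eta>)*s" using st d0 e0 by simp
    have S2: "0 \<le> psi2 a s \<delta> 0" using st d0 e0 by simp
    have S3: "psi2 a s \<delta> 0 \<le> ((1-a)\<^sup>2 + s)/\<delta>" using st d0 e0 by simp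
    have "V (psi1 a s) (psi2 a s \<delta> 0) \<le> 4/pi\<^sup>2*(1+\<eta>)*s/(\<rho>*\<delta>) + ((1-a)\<^sup>2 + s)/\<delta>"
      unfolding V_def using S1 S3 rd by (intro add_mono divide_right_mono) auto
    also have "\<dots> = (1-a)\<^sup>2/\<delta> + s * (4/pi\<^sup>2*(1+\<eta>)/(\<rho>*\<delta>) + 1/\<delta>)"
      by (simp add: algebra_simps add_divide_distrib)
    also have "\<dots> \<le> (1-a)\<^sup>2/\<delta> + s * \<rho>" using key2 h(2) by (intro add_left_mono mult_left_mono) auto
    also have "\<dots> = \<rho> * V a s" unfolding V_def using rho d0 by (simp add: field_simps)
    finally show ?thesis using S2 by simp
  qed
  define \<epsilon>1 where "\<epsilon>1 = r/2"
  define \<epsilon>2 where "\<epsilon>2 = r\<^sup>2/(2*\<delta>)"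
  have ep: "\<epsilon>1 > 0" "\<epsilon>2 > 0" using r0 d0 by (auto simp: \<epsilon>1_def \<epsilon>2_def)
  have main: "((\<lambda>t. fst (se \<delta> 0 \<alpha>0 \<sigma>02 t)) \<longlonglongrightarrow> 1) \<and> ((\<lambda>t. snd (se \<delta> 0 \<alpha>0 \<sigma>02 t)) \<longlonglongrightarrow> 0)"
    if "\<alpha>0 \<in> {1 - \<epsilon>1 <..< 1} \<and> \<sigma>02 \<in> {0 <..< \<epsilon>2}" for \<alpha>0 \<sigma>02
  proof -
    from that have i1: "1 - \<epsilon>1 < \<alpha>0" "\<alpha>0 < 1" and i2: "0 < \<sigma>02" "\<sigma>02 < \<epsilon>2" by auto
    define A where "A = (\<lambda>t. fst (se \<delta> 0 \<alpha>0 \<sigma>02 t))"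
    define S where "S = (\<lambda>t. snd (se \<delta> 0 \<alpha>0 \<sigma>02 t))"
    have AS: "A (Suc t) = psi1 (A t) (S t)" "S (Suc t) = psi2 (A t) (S t) \<delta> 0" for t
      by (simp_all add: A_def S_def se_Suc del: se.simps)
    define V0 where "V0 = V \<alpha>0 \<sigma>02"
    have V00: "V0 \<ge> 0" using i2 rd by (simp add: V0_def V_def)
    have V0r: "V0 < r\<^sup>2/\<delta>"
    proof -
      have x: "(1-\<alpha>0)\<^sup>2 \<le> (r/2)\<^sup>2" using i1 r0 by (intro power_mono) (auto simp: \<epsilon>1_def)
      have "(1-\<alpha>0)\<^sup>2/(\<rho>*\<delta>) \<le> (r/2)\<^sup>2/(\<rho>*\<delta>)" using x rd by (intro divide_right_mono) auto
      also have "(r/2)\<^sup>2/(\<rho>*\<delta>) \<le> (r/2)\<^sup>2/((1/2)*\<delta>)"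
        using rho d0 by (intro divide_left_mono mult_right_mono) auto
      also have "\<dots> = r\<^sup>2/(2*\<delta>)" by (simp add: power2_eq_square field_simps)
      finally have "(1-\<alpha>0)\<^sup>2/(\<rho>*\<delta>) \<le> r\<^sup>2/(2*\<delta>)" .
      then show ?thesis using i2 d0 by (simp add: V0_def V_def \<epsilon>2_def field_simps)
    qed
    have inv: "\<bar>1 - A t\<bar> \<le> r \<and> 0 \<le> S t \<and> V (A t) (S t) \<le> \<rho>^t * V0" for t
    proof (induction t)
      case 0
      show ?case using i1 i2 r0 by (simp add: A_def S_def V0_def \<epsilon>1_def)
    next
      case (Suc t)
      have pt: "\<rho>^t \<le> 1" by (rule power_le_one) (use rho in auto)
      have "V (A t) (S t) \<le> V0" using Suc pt V00 mult_right_mono[OF pt V00] by linarith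
      then have "V (A t) (S t) \<le> r\<^sup>2/\<delta>" using V0r by linarith
      with Suc step have st: "0 \<le> S (Suc t)" "V (A (Suc t)) (S (Suc t)) \<le> \<rho> * V (A t) (S t)"
        by (auto simp: AS)
      have "\<rho> * V (A t) (S t) \<le> \<rho> * (\<rho>^t * V0)" using Suc rho by (intro mult_left_mono) auto
      then have v1: "V (A (Suc t)) (S (Suc t)) \<le> \<rho>^Suc t * V0" using st by simp
      have pt1: "\<rho>^Suc t \<le> 1" by (rule power_le_one) (use rho in auto)
      have "\<rho>^Suc t * V0 \<le> V0" using mult_right_mono[OF pt1 V00] by simp
      then have v2: "V (A (Suc t)) (S (Suc t)) < r\<^sup>2/\<delta>" using v1 V0r by linarith
      have "(1 - A (Suc t))\<^sup>2/(\<rho>*\<delta>) \<le> V (A (Suc t)) (S (Suc t))" using st by (simp add: V_def)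
      then have "(1 - A (Suc t))\<^sup>2 \<le> (\<rho>*\<delta>) * V (A (Suc t)) (S (Suc t))" using rd by (simp add: divide_le_eq mult.commute)
      also have "\<dots> \<le> (\<rho>*\<delta>) * (r\<^sup>2/\<delta>)" using v2 rd by (intro mult_left_mono) auto
      also have "\<dots> = \<rho> * r\<^sup>2" using d0 by simp
      also have "\<dots> \<le> 1 * r\<^sup>2" using rho by (intro mult_right_mono) auto
      finally have "\<bar>1 - A (Suc t)\<bar> \<le> \<bar>r\<bar>" by (simp add: abs_le_square_iff)
      then show ?case using st v1 r0 by simp
    qed
    have Sb: "0 \<le> S t" "S t \<le> V0 * \<rho>^t" for t
    proof -
      show "0 \<le> S t" using inv by simp
      have "S t \<le> V (A t) (S t)" using rd by (simp add: V_def)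
      then show "S t \<le> V0 * \<rho>^t" using inv[of t] by (simp add: mult.commute)
    qed
    have Ub: "(1 - A t)\<^sup>2 \<le> (\<rho>*\<delta>*V0) * \<rho>^t" for t
    proof -
      have "(1 - A t)\<^sup>2/(\<rho>*\<delta>) \<le> V (A t) (S t)" using inv[of t] by (simp add: V_def)
      also have "\<dots> \<le> \<rho>^t * V0" using inv by simp
      finally show ?thesis using rd by (simp add: divide_le_eq algebra_simps)
    qed
    have "(\<lambda>t. (1 - A t)\<^sup>2) \<longlonglongrightarrow> 0" using Ub rho by (intro squeeze_geom) auto
    then have "A \<longlonglongrightarrow> 1" by (rule to_one)
    moreover have "S \<longlonglongrightarrow> 0" using Sb rho by (intro squeeze_geom) auto
    ultimately show ?thesis by (simp add: A_def S_def)
  qed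
  show ?thesis using ep main by blast
qed

lemma part_unstable:
  assumes d0: "\<delta> > 0" and dK: "\<delta> < delta_global"
    and LA: "(\<lambda>t. fst (se \<delta> 0 \<alpha>0 \<sigma>02 t)) \<longlonglongrightarrow> 1"
    and LS: "(\<lambda>t. snd (se \<delta> 0 \<alpha>0 \<sigma>02 t)) \<longlonglongrightarrow> 0"
  shows "(\<alpha>0, \<sigma>02) = (1, 0)"
proof -
  define K where "K = 1 + 4/pi\<^sup>2"
  have Kd: "\<delta> < K" using dK by (simp add: K_def delta_global_def)
  have K0: "K > 0" by (simp add: K_def add_pos_nonneg)
  define \<gamma> where "\<gamma> = (K - \<delta>)/K"
  have g: "0 < \<gamma>" "\<gamma> < 1" using Kd K0 d0 by (auto simp: \<gamma>_def field_simps)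
  have gK: "(1-\<gamma>)*K = \<delta>" using K0 by (simp add: \<gamma>_def field_simps)
  define A where "A = (\<lambda>t. fst (se \<delta> 0 \<alpha>0 \<sigma>02 t))"
  define S where "S = (\<lambda>t. snd (se \<delta> 0 \<alpha>0 \<sigma>02 t))"
  have AS: "A (Suc t) = psi1 (A t) (S t)" "S (Suc t) = psi2 (A t) (S t) \<delta> 0" for t
    by (simp_all add: A_def S_def se_Suc del: se.simps)
  have LA': "A \<longlonglongrightarrow> 1" and LS': "S \<longlonglongrightarrow> 0" using LA LS by (simp_all add: A_def S_def)
  have "\<forall>\<^sub>F t in sequentially. 1/2 < A t" using order_tendstoD(1)[OF LA', of "1/2"] by simp
  moreover have "\<forall>\<^sub>F t in sequentially. S t < \<gamma>\<^sup>2/16" using order_tendstoD(2)[OF LS', of "\<gamma>\<^sup>2/16"] g by simp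
  ultimately have "\<forall>\<^sub>F t in sequentially. 1/2 < A t \<and> S t < \<gamma>\<^sup>2/16" by (rule eventually_conj)
  then obtain N where N: "\<And>t. t \<ge> N \<Longrightarrow> 1/2 < A t \<and> S t < \<gamma>\<^sup>2/16"
    unfolding eventually_sequentially by blast
  have Sn: "0 \<le> S t" if "t \<ge> N" for t
  proof (rule ccontr)
    assume "\<not> 0 \<le> S t"
    then have "psi1 (A t) (S t) < 0" using N[OF that] by (intro psi1_neg) auto
    moreover have "1/2 < A (Suc t)" using N[of "Suc t"] that by simp
    ultimately show False by (simp add: AS)
  qed
  have Al: "A t \<le> 1" if "t \<ge> 1" for t
  proof -
    have "t = Suc (t - 1)" using that by simp
    then have "A t = psi1 (A (t-1)) (S (t-1))" using AS(1)[of "t-1"] by simp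
    then show ?thesis using psi1_le1 by simp
  qed
  define T where "T = Suc N"
  have reg: "1/2 \<le> A t \<and> A t \<le> 1 \<and> 0 \<le> S t \<and> S t \<le> \<gamma>\<^sup>2/16" if "t \<ge> T" for t
    using N[of t] Sn[of t] Al[of t] that by (auto simp: T_def)
  define V where "V = (\<lambda>t. (1 - A t)\<^sup>2/\<delta> + S t)"
  have Vs: "V t \<le> V (Suc t)" if "t \<ge> T" for t
  proof -
    note r = reg[OF that]
    have U: "(1 - A (Suc t))\<^sup>2 \<ge> 4/pi\<^sup>2*(1-\<gamma>)*S t"
      using step_unstable(1)[OF d0 _ _ _ _ g] r by (simp add: AS)
    have W: "S (Suc t) \<ge> ((1 - A t)\<^sup>2 + (1-\<gamma>)*S t)/\<delta>"
      using step_unstable(2)[OF d0 _ _ _ _ g] r by (simp add: AS)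
    have "V (Suc t) \<ge> 4/pi\<^sup>2*(1-\<gamma>)*S t/\<delta> + ((1 - A t)\<^sup>2 + (1-\<gamma>)*S t)/\<delta>"
      unfolding V_def using U W d0 by (intro add_mono divide_right_mono) auto
    moreover have "4/pi\<^sup>2*(1-\<gamma>)*S t/\<delta> + ((1 - A t)\<^sup>2 + (1-\<gamma>)*S t)/\<delta>
        = (1 - A t)\<^sup>2/\<delta> + ((1-\<gamma>)*K) * S t/\<delta>"
      using d0 by (simp add: K_def field_simps)
    moreover have "((1-\<gamma>)*K) * S t/\<delta> = S t" using gK d0 by simp
    ultimately show ?thesis by (simp add: V_def)
  qed
  have VT: "V T \<le> V (T + k)" for k
  proof (induction k)
    case 0 then show ?case by simp
  next
    case (Suc k) then show ?case using Vs[of "T + k"] by simp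
  qed
  have LV: "V \<longlonglongrightarrow> (1 - 1)\<^sup>2/\<delta> + 0" unfolding V_def by (intro tendsto_intros LA' LS') (use d0 in simp)
  have V0: "V T \<le> 0"
  proof (rule ccontr)
    assume "\<not> V T \<le> 0"
    then have "\<forall>\<^sub>F t in sequentially. V t < V T" using order_tendstoD(2)[OF LV] by simp
    then obtain M where M: "\<And>t. t \<ge> M \<Longrightarrow> V t < V T" unfolding eventually_sequentially by blast
    have "V (T + M) < V T" using M by simp
    with VT[of M] show False by simp
  qed
  have u0: "0 \<le> (1 - A T)\<^sup>2/\<delta>" using d0 by simp
  have s0: "0 \<le> S T" using reg[of T] by simp
  have "S T = 0" using V0 u0 s0 by (simp add: V_def)
  moreover have "(1 - A T)\<^sup>2/\<delta> = 0" using V0 u0 s0 unfolding V_def by linarith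
  then have "A T = 1" using d0 by simp
  ultimately have "se \<delta> 0 \<alpha>0 \<sigma>02 T = (1, 0)" by (simp add: A_def S_def prod_eq_iff)
  then show ?thesis by (rule back_to_start[OF d0])
qed


theorem mainTheorem5:
  fixes \<delta> :: real
  assumes "\<delta> > 0"
  shows "(psi1 1 0 = 1 \<and> psi2 1 0 \<delta> 0 = 0)
    \<and> (\<delta> > delta_global \<longrightarrow>
           (\<exists>\<epsilon>1 > 0. \<exists>\<epsilon>2 > 0. \<forall>\<alpha>0 \<sigma>02.
             \<alpha>0 \<in> {1 - \<epsilon>1 <..< 1} \<and> \<sigma>02 \<in> {0 <..< \<epsilon>2} \<longrightarrow>
               ((\<lambda>t. fst (se \<delta> 0 \<alpha>0 \<sigma>02 t)) \<longlonglongrightarrow> 1) \<and>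
               ((\<lambda>t. snd (se \<delta> 0 \<alpha>0 \<sigma>02 t)) \<longlonglongrightarrow> 0)))
    \<and> (\<delta> < delta_global \<longrightarrow>
          (\<forall>\<alpha>0 \<sigma>02. \<sigma>02 \<ge> 0 \<and> (\<alpha>0, \<sigma>02) \<noteq> (0, 0) \<and>
             ((\<lambda>t. fst (se \<delta> 0 \<alpha>0 \<sigma>02 t)) \<longlonglongrightarrow> 1) \<and>
             ((\<lambda>t. snd (se \<delta> 0 \<alpha>0 \<sigma>02 t)) \<longlonglongrightarrow> 0) \<longrightarrow>
             (\<alpha>0, \<sigma>02) = (1, 0)))"
proof -
  have p1: "psi1 1 0 = 1" by (simp add: psi1_def arctan_conv_def)
  have p2: "psi2 1 0 \<delta> 0 = 0" by (simp add: psi2_def arctan_conv_def)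
  show ?thesis using p1 p2 part_stable part_unstable[OF assms] by blast
qed

end
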